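(* Let $n\ge 1$ and let $h$ be a hole of the triangular board $T_n$. Suppose a sequence of jumps on $T_n$ starts from the position in which every hole holds a peg except $h$, and ends in the position in which exactly one peg remains, located at $h$ (a solution to the complement problem at $h$). Then none of the board positions occurring in this sequence has $120^\circ$ rotational symmetry, i.e., no such position $P$ satisfies $P(r(g))=P(g)$ for every hole $g$, where $r(x,y)=(y-x,\,n-1-x)$.
   Context: The triangular board $T_n$ is the set of holes with integer skew coordinates $(x,y)$ satisfying $0\le x\le y\le n-1$. A board position $P$ assigns to each hole either a peg or no peg. A jump takes a peg at hole $p$, jumps it over a peg at an adjacent hole $p+d$ into an empty hole $p+2d$, where $d$ is one of the six directions $(\pm1,0)$, $(0,\pm1)$, $(1,1)$, $(-1,-1)$ and all three holes lie in $T_n$; the jumped-over peg is removed. The map $r(x,y)=(y-x,n-1-x)$ is the counterclockwise rotation of $T_n$ by $120^\circ$ in skew coordinates; a position has $120^\circ$ rotational symmetry if it is invariant under $r$. *)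

theory Defs
  imports Main
begin

text \<open>Holes of the triangular board T_n in skew coordinates.\<close>
definition board :: "nat \<Rightarrow> (int \<times> int) set" where
  "board n = {(x, y). 0 \<le> x \<and> x \<le> y \<and> y \<le> int n - 1}"

definition dirs :: "(int \<times> int) set" where
  "dirs = {(1,0), (-1,0), (0,1), (0,-1), (1,1), (-1,-1)}"

text \<open>A board position is represented by the set of holes holding a peg.
  jump n P Q: Q arises from P by one jump on T_n.\<close>
definition jump :: "nat \<Rightarrow> (int \<times> int) set \<Rightarrow> (int \<times> int) set \<Rightarrow> bool" where
  "jump n P Q \<longleftrightarrow> (\<exists>x y dx dy. (dx, dy) \<in> dirs \<and>
      (x, y) \<in> board n \<and> (x + dx, y + dy) \<in> board n \<and>
      (x + 2 * dx, y + 2 * dy) \<in> board n \<and>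
      (x, y) \<in> P \<and> (x + dx, y + dy) \<in> P \<and> (x + 2 * dx, y + 2 * dy) \<notin> P \<and>
      Q = (P - {(x, y), (x + dx, y + dy)}) \<union> {(x + 2 * dx, y + 2 * dy)})"

definition rot :: "nat \<Rightarrow> int \<times> int \<Rightarrow> int \<times> int" where
  "rot n g = (snd g - fst g, int n - 1 - fst g)"

definition rot_symmetric :: "nat \<Rightarrow> (int \<times> int) set \<Rightarrow> bool" where
  "rot_symmetric n P \<longleftrightarrow> (\<forall>g \<in> board n. (rot n g \<in> P \<longleftrightarrow> g \<in> P))"

definition jump_seq :: "nat \<Rightarrow> (int \<times> int) set list \<Rightarrow> bool" where
  "jump_seq n Ps \<longleftrightarrow> Ps \<noteq> [] \<and> (\<forall>i. Suc i < length Ps \<longrightarrow> jump n (Ps ! i) (Ps ! Suc i))"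

end

theory Submission
  imports Defs
begin

definition col :: "int \<times> int \<Rightarrow> int" where "col g = (fst g + snd g) mod 3"
definition N :: "int \<Rightarrow> (int \<times> int) set \<Rightarrow> nat" where "N c P = card {g\<in>P. col g = c}"

lemma three_col:
  fixes u s c :: int
  assumes "s \<in> {1,-1,2,-2}" "c \<in> {0,1,2}"
  shows "(u mod 3 = c \<and> (u+s) mod 3 \<noteq> c \<and> (u+2*s) mod 3 \<noteq> c) \<or>
         (u mod 3 \<noteq> c \<and> (u+s) mod 3 = c \<and> (u+2*s) mod 3 \<noteq> c) \<or>
         (u mod 3 \<noteq> c \<and> (u+s) mod 3 \<noteq> c \<and> (u+2*s) mod 3 = c)"
proof -
  have e1: "(u+s) mod 3 = (u mod 3 + s) mod 3" by (simp add: mod_add_left_eq)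
  have e2: "(u+2*s) mod 3 = (u mod 3 + 2*s) mod 3" by (simp add: mod_add_left_eq)
  have "u mod 3 \<in> {0,1,2}" by auto
  then show ?thesis unfolding e1 e2 using assms by auto
qed

lemma jump_fin: "jump n P Q \<Longrightarrow> finite P \<Longrightarrow> finite Q"
  unfolding jump_def by auto

lemma jump_flip:
  assumes "jump n P Q" "finite P" "c \<in> {0,1,2}"
  shows "odd (N c Q) \<longleftrightarrow> \<not> odd (N c P)"
proof -
  obtain x y dx dy where d: "(dx, dy) \<in> dirs" and
     m: "(x, y) \<in> P" "(x + dx, y + dy) \<in> P" "(x + 2 * dx, y + 2 * dy) \<notin> P"
     and Q: "Q = (P - {(x, y), (x + dx, y + dy)}) \<union> {(x + 2 * dx, y + 2 * dy)}"
    using assms(1) unfolding jump_def by blast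
  define p where "p = (x,y)"
  define q where "q = (x + dx, y + dy)"
  define t where "t = (x + 2 * dx, y + 2 * dy)"
  have ne: "p \<noteq> q" "p \<noteq> t" "q \<noteq> t" using d unfolding p_def q_def t_def dirs_def by auto
  have cases: "(col p = c \<and> col q \<noteq> c \<and> col t \<noteq> c) \<or> (col p \<noteq> c \<and> col q = c \<and> col t \<noteq> c)
     \<or> (col p \<noteq> c \<and> col q \<noteq> c \<and> col t = c)"
  proof -
    have s: "dx + dy \<in> {1,-1,2,-2}" using d unfolding dirs_def by auto
    have "col q = (x + y + (dx+dy)) mod 3" "col t = (x + y + 2*(dx+dy)) mod 3" "col p = (x+y) mod 3"
      unfolding col_def p_def q_def t_def by (simp_all add: algebra_simps)
    then show ?thesis using three_col[OF s assms(3), of "x+y"] by simp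
  qed
  let ?A = "{g\<in>P. col g = c}"
  have fA: "finite ?A" using assms(2) by simp
  have Qe: "Q = (P - {p, q}) \<union> {t}" using Q p_def q_def t_def by simp
  from cases show ?thesis
  proof (elim disjE conjE)
    assume "col p = c" "col q \<noteq> c" "col t \<noteq> c"
    hence "{g\<in>Q. col g = c} = ?A - {p}" using Qe by auto
    moreover have "p \<in> ?A" using m `col p = c` p_def by simp
    ultimately have "N c Q = N c P - 1" unfolding N_def using fA by (simp add: card_Diff_singleton)
    moreover have "N c P > 0" unfolding N_def using fA \<open>p \<in> ?A\<close> by (metis card_gt_0_iff empty_iff)
    ultimately show ?thesis by (cases "N c P") auto
  next
    assume "col p \<noteq> c" "col q = c" "col t \<noteq> c"
    hence "{g\<in>Q. col g = c} = ?A - {q}" using Qe ne by auto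
    moreover have "q \<in> ?A" using m `col q = c` q_def by simp
    ultimately have "N c Q = N c P - 1" unfolding N_def using fA by (simp add: card_Diff_singleton)
    moreover have "N c P > 0" unfolding N_def using fA \<open>q \<in> ?A\<close> by (metis card_gt_0_iff empty_iff)
    ultimately show ?thesis by (cases "N c P") auto
  next
    assume "col p \<noteq> c" "col q \<noteq> c" "col t = c"
    hence "{g\<in>Q. col g = c} = insert t ?A" using Qe ne by auto
    moreover have "t \<notin> ?A" using m t_def by simp
    ultimately have "N c Q = N c P + 1" unfolding N_def using fA by simp
    thus ?thesis by auto
  qed
qed


lemma mod3_close: fixes a b x :: int
  assumes "(x + a) mod 3 = (x + b) mod 3" "\<bar>a - b\<bar> \<le> 2" shows "a = b"
proof -
  have "3 dvd ((x+a) - (x+b))" using assms(1) by (simp add: mod_eq_dvd_iff)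
  then obtain k where "a - b = 3 * k" by (auto simp: algebra_simps)
  with assms(2) show ?thesis by arith
qed
lemma l1: fixes m x1 y1 x2 y2 c :: int
  assumes "0 \<le> x1" "x1 \<le> y1" "y1 \<le> m + 2" "m \<le> y1" "0 \<le> x2" "x2 \<le> y2" "y2 \<le> m + 2" "m \<le> y2"
   "(x1 + y1) mod 3 = c" "(x2 + y2) mod 3 = c" "min x1 (m+1) = min x2 (m+1)"
  shows "x1 = x2 \<and> y1 = y2"
proof (cases "x1 \<le> m \<or> x2 \<le> m")
  case True
  then have "x1 = x2" using assms(11) by (auto simp: min_def split: if_splits)
  then show ?thesis using mod3_close[of x1 y1 y2] assms by auto
next
  case False
  then have "(x1 + y1) - (x2 + y2) \<le> 2" "(x2 + y2) - (x1 + y1) \<le> 2" using assms by auto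
  then have "x1 + y1 = x2 + y2" using mod3_close[of 0 "x1+y1" "x2+y2"] assms by auto
  then show ?thesis using False assms by auto
qed
lemma l2: fixes m v c :: int
  assumes "0 \<le> v" "v \<le> m + 1" "0 \<le> m" "c \<in> {0,1,2}"
  shows "\<exists>x y. 0 \<le> x \<and> x \<le> y \<and> y \<le> m + 2 \<and> m \<le> y \<and> (x+y) mod 3 = c \<and> min x (m+1) = v"
proof (cases "v \<le> m")
  case True
  define k where "k = (c - v - m) mod 3"
  have k: "0 \<le> k" "k \<le> 2" unfolding k_def by auto
  have "v + (m + k) = (v+m) + (c - v - m) mod 3" unfolding k_def by simp
  hence "(v + (m + k)) mod 3 = (v + m + (c - v - m)) mod 3" using mod_add_right_eq[of "v+m" "c - v - m" 3] by (simp add: add.assoc)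
  also have "\<dots> = c" using assms(4) by auto
  finally show ?thesis using True k assms by (intro exI[of _ v] exI[of _ "m+k"]) auto
next
  case False
  hence v: "v = m + 1" using assms by auto
  define k where "k = (c - 2*m - 2) mod 3"
  have k: "k \<in> {0,1,2}" unfolding k_def by auto
  have "(2*m + 2 + k) mod 3 = (2*m + 2 + (c - 2*m - 2)) mod 3" unfolding k_def
    using mod_add_right_eq[of "2*m+2" "c - 2*m - 2" 3] by simp
  hence kk: "(2*m + 2 + k) mod 3 = c" using assms(4) by auto
  show ?thesis
  proof (cases "k = 2")
    case True
    then show ?thesis using kk v assms by (intro exI[of _ "m+2"] exI[of _ "m+2"]) (auto simp: algebra_simps)
  next
    case False
    then show ?thesis using kk v k assms by (intro exI[of _ "m+1"] exI[of _ "m+1+k"]) (auto simp: algebra_simps)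
  qed
qed

lemma board_fin: "finite (board n)"
proof -
  have "board n \<subseteq> {0..int n} \<times> {0..int n}" by (auto simp: board_def)
  then show ?thesis by (rule finite_subset) simp
qed

lemma strip:
  assumes "c \<in> {0,1,2}"
  shows "N c (board (n+3)) = N c (board n) + (n+2)"
proof -
  let ?A = "{g\<in>board (n+3). col g = c}"
  let ?Z = "{g\<in>board n. col g = c}"
  let ?S = "{g\<in>?A. snd g \<ge> int n}"
  have bn3: "board (n+3) = {(x,y). 0 \<le> x \<and> x \<le> y \<and> y \<le> int n + 2}" by (auto simp: board_def)
  have un: "?A = ?Z \<union> ?S" unfolding bn3 board_def by auto
  have dis: "?Z \<inter> ?S = {}" unfolding board_def by auto
  have f0: "finite ?Z" using board_fin by simp
  have fS: "finite ?S" using board_fin by simp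
  have "bij_betw (\<lambda>g. min (fst g) (int n + 1)) ?S {0..int n + 1}"
    unfolding bij_betw_def
  proof
    show "inj_on (\<lambda>g. min (fst g) (int n + 1)) ?S"
    proof (rule inj_onI)
      fix a b assume a: "a \<in> ?S" and b: "b \<in> ?S" and e: "min (fst a) (int n + 1) = min (fst b) (int n + 1)"
      obtain x1 y1 where a1: "a = (x1, y1)" by fastforce
      obtain x2 y2 where b1: "b = (x2, y2)" by fastforce
      have ha: "0 \<le> x1" "x1 \<le> y1" "y1 \<le> int n + 2" "int n \<le> y1" "(x1 + y1) mod 3 = c"
        using a unfolding a1 by (simp_all add: board_def col_def)
      have hb: "0 \<le> x2" "x2 \<le> y2" "y2 \<le> int n + 2" "int n \<le> y2" "(x2 + y2) mod 3 = c"
        using b unfolding b1 by (simp_all add: board_def col_def)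
      have he: "min x1 (int n + 1) = min x2 (int n + 1)" using e unfolding a1 b1 by simp
      have "x1 = x2 \<and> y1 = y2" by (rule l1[OF ha(1-4) hb(1-4) ha(5) hb(5) he])
      then show "a = b" using a1 b1 by simp
    qed
  next
    show "(\<lambda>g. min (fst g) (int n + 1)) ` ?S = {0..int n + 1}"
    proof
      show "(\<lambda>g. min (fst g) (int n + 1)) ` ?S \<subseteq> {0..int n + 1}"
        by (auto simp: board_def)
    next
      show "{0..int n + 1} \<subseteq> (\<lambda>g. min (fst g) (int n + 1)) ` ?S"
      proof
        fix v assume v: "v \<in> {0..int n + 1}"
        then obtain x y where xy: "0 \<le> x" "x \<le> y" "y \<le> int n + 2" "int n \<le> y" "(x+y) mod 3 = c"
            "min x (int n + 1) = v"
          using l2[of v "int n" c] assms by auto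
        have "(x, y) \<in> board (n+3)" using xy by (simp add: board_def)
        moreover have "col (x, y) = c" using xy by (simp add: col_def)
        ultimately have "(x, y) \<in> ?S" using xy by simp
        then show "v \<in> (\<lambda>g. min (fst g) (int n + 1)) ` ?S" using xy(6) by force
      qed
    qed
  qed
  then have "card ?S = card {0..int n + 1}" by (rule bij_betw_same_card)
  also have "\<dots> = n + 2" by simp
  finally have cS: "card ?S = n + 2" .
  have "card ?A = card (?Z \<union> ?S)" using un by (rule arg_cong[where f=card])
  also have "\<dots> = card ?Z + card ?S" using card_Un_disjoint[OF f0 fS dis] .
  finally have "card ?A = card ?Z + card ?S" .
  then show ?thesis unfolding N_def using cS by simp
qed

lemma board_count:
  "N 0 (board (3*m+1)) = N 1 (board (3*m+1)) + 1 \<and> N 1 (board (3*m+1)) = N 2 (board (3*m+1))"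
proof (induction m)
  case 0
  have b: "board (Suc 0) = {(0,0)}" by (auto simp: board_def)
  have e: "{g\<in>board (Suc 0). col g = 0} = {(0,0)}" "{g\<in>board (Suc 0). col g = 1} = {}"
    "{g\<in>board (Suc 0). col g = 2} = {}" by (auto simp: b col_def)
  have "3 * 0 + 1 = Suc 0" by simp
  then show ?case unfolding N_def by (simp only:) (simp only: e card.empty card_insert_if, simp)
next
  case (Suc m)
  have e: "3 * Suc m + 1 = (3*m+1) + 3" by simp
  show ?case unfolding e using strip[of 0 "3*m+1"] strip[of 1 "3*m+1"] strip[of 2 "3*m+1"] Suc by simp
qed

lemma l3: fixes x y m :: int shows "((y - x) + (m - x)) mod 3 = ((x + y) mod 3 + m) mod 3"
proof -
  have "(y - x) + (m - x) = ((x+y) + m) + (-x) * 3" by simp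
  then have "((y - x) + (m - x)) mod 3 = ((x+y) + m) mod 3" by (metis mod_mult_self1)
  also have "\<dots> = ((x + y) mod 3 + m) mod 3" by (simp add: mod_add_left_eq)
  finally show ?thesis .
qed

lemma col_rot: "col (rot n g) = (col g + (int n - 1)) mod 3"
proof -
  obtain x y where g: "g = (x, y)" by fastforce
  show ?thesis unfolding g col_def rot_def using l3[of y x "int n - 1"] by simp
qed

lemma col_range: "col g \<in> {0,1,2}"
  unfolding col_def by auto

lemma rot_count:
  assumes "P \<subseteq> board n" "rot_symmetric n P" "c \<in> {0,1,2}"
  shows "N c P = N ((c + (int n - 1) mod 3) mod 3) P"
proof -
  have cc: "(c + (int n - 1) mod 3) mod 3 = (c + (int n - 1)) mod 3" by (rule mod_add_right_eq)
  let ?c' = "(c + (int n - 1)) mod 3"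
  have "bij_betw (rot n) {g\<in>P. col g = c} {g\<in>P. col g = ?c'}"
    unfolding bij_betw_def
  proof
    show "inj_on (rot n) {g\<in>P. col g = c}"
      by (auto simp: inj_on_def rot_def prod_eq_iff)
  next
    show "rot n ` {g\<in>P. col g = c} = {g\<in>P. col g = ?c'}"
    proof
      show "rot n ` {g\<in>P. col g = c} \<subseteq> {g\<in>P. col g = ?c'}"
      proof
        fix g' assume "g' \<in> rot n ` {g\<in>P. col g = c}"
        then obtain g where g: "g \<in> P" "col g = c" "g' = rot n g" by auto
        have "g \<in> board n" using g assms(1) by auto
        then have "rot n g \<in> P" using assms(2) g unfolding rot_symmetric_def by blast
        then show "g' \<in> {g\<in>P. col g = ?c'}" using g col_rot[of n g] by simp
      qed
    next
      show "{g\<in>P. col g = ?c'} \<subseteq> rot n ` {g\<in>P. col g = c}"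
      proof
        fix g' assume g': "g' \<in> {g\<in>P. col g = ?c'}"
        obtain u v where uv: "g' = (u, v)" by fastforce
        define g where "g = (int n - 1 - v, u + int n - 1 - v)"
        have gb: "g \<in> board n" using g' assms(1) unfolding uv g_def board_def by auto
        have rg: "rot n g = g'" unfolding uv g_def rot_def by simp
        have gP: "g \<in> P" using assms(2) gb g' rg unfolding rot_symmetric_def by auto
        have "(int n - 1 + col g) mod 3 = (int n - 1 + c) mod 3"
          using g' col_rot[of n g] rg by (simp add: add.commute)
        moreover have "\<bar>col g - c\<bar> \<le> 2" using col_range[of g] assms(3) by auto
        ultimately have "col g = c" by (rule mod3_close)
        then show "g' \<in> rot n ` {g\<in>P. col g = c}" using gP rg by force
      qed
    qed
  qed
  then have "card {g\<in>P. col g = c} = card {g\<in>P. col g = ?c'}" by (rule bij_betw_same_card)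
  then show ?thesis unfolding N_def cc .
qed

lemma jump_sub: "jump n P Q \<Longrightarrow> P \<subseteq> board n \<Longrightarrow> Q \<subseteq> board n"
  unfolding jump_def by auto

definition E :: "(int \<times> int) set \<Rightarrow> int \<Rightarrow> int \<Rightarrow> bool" where
  "E Q a b \<longleftrightarrow> (odd (N a Q) \<longleftrightarrow> odd (N b Q))"

lemma seq_inv:
  assumes "jump_seq n Ps" "hd Ps \<subseteq> board n"
  shows "i < length Ps \<Longrightarrow> Ps ! i \<subseteq> board n \<and>
     (\<forall>a\<in>{0,1,2}. \<forall>b\<in>{0,1,2}. E (Ps ! i) a b = E (hd Ps) a b)"
proof (induction i)
  case 0
  have "hd Ps = Ps ! 0" using assms(1) unfolding jump_seq_def by (simp add: hd_conv_nth)
  then show ?case using assms(2) by simp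
next
  case (Suc i)
  then have IH: "Ps ! i \<subseteq> board n" "\<forall>a\<in>{0,1,2}. \<forall>b\<in>{0,1,2}. E (Ps ! i) a b = E (hd Ps) a b" by auto
  have j: "jump n (Ps ! i) (Ps ! Suc i)" using assms(1) Suc.prems unfolding jump_seq_def by blast
  have fi: "finite (Ps ! i)" using IH(1) board_fin finite_subset by blast
  have sub: "Ps ! Suc i \<subseteq> board n" using jump_sub[OF j IH(1)] .
  have "\<forall>a\<in>{0,1,2}. \<forall>b\<in>{0,1,2}. E (Ps ! Suc i) a b = E (Ps ! i) a b"
    unfolding E_def using jump_flip[OF j fi] by auto
  then show ?case using IH sub by auto
qed

lemma N_single: "N c {h} = (if col h = c then 1 else 0)"
proof -
  have "{g\<in>{h}. col g = c} = (if col h = c then {h} else {})" by auto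
  then show ?thesis unfolding N_def by simp
qed



lemma N_diff:
  assumes "h \<in> board n"
  shows "N c (board n - {h}) = (if col h = c then N c (board n) - 1 else N c (board n))"
proof -
  have "{g\<in>board n - {h}. col g = c} = {g\<in>board n. col g = c} - {h}" by auto
  then show ?thesis unfolding N_def using assms by (simp add: card_Diff_singleton_if)
qed

theorem corollary2p1:
  fixes n :: nat and h :: "int \<times> int" and Ps :: "(int \<times> int) set list"
  assumes "n \<ge> 1"
    and "h \<in> board n"
    and "jump_seq n Ps"
    and "hd Ps = board n - {h}"
    and "last Ps = {h}"
  shows "\<forall>P \<in> set Ps. \<not> rot_symmetric n P"
proof (intro ballI notI)
  fix P assume PS: "P \<in> set Ps" and sym: "rot_symmetric n P"
  have ne: "Ps \<noteq> []" using assms(3) unfolding jump_seq_def by simp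
  have hsub: "hd Ps \<subseteq> board n" using assms(4) by auto
  note inv = seq_inv[OF assms(3) hsub]
  obtain k where k: "k < length Ps" "P = Ps ! k" using PS in_set_conv_nth by metis
  have lastI: "last Ps = Ps ! (length Ps - 1)" using ne by (simp add: last_conv_nth)
  have L: "length Ps - 1 < length Ps" using ne by simp
  have Elast: "\<forall>a\<in>{0,1,2}. \<forall>b\<in>{0,1,2}. E {h} a b = E (board n - {h}) a b"
    using inv[OF L] lastI assms(4,5) by simp
  have Ek: "\<forall>a\<in>{0,1,2}. \<forall>b\<in>{0,1,2}. E P a b = E (board n - {h}) a b"
    using inv[OF k(1)] k(2) assms(4) by simp
  have Psub: "P \<subseteq> board n" using inv[OF k(1)] k(2) by simp
  have hcol: "col h \<in> {0,1,2}" by (rule col_range)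
  have Eh: "\<not> (E {h} 0 1 \<and> E {h} 0 2)"
    using hcol unfolding E_def N_single by auto
  have "(int n - 1) mod 3 \<in> {0,1,2}" by auto
  then consider "(int n - 1) mod 3 = 0" | "(int n - 1) mod 3 = 1" | "(int n - 1) mod 3 = 2" by blast
  then show False
  proof cases
    case 1
    have "n mod 3 = 1" using 1 assms(1) by presburger
    then have ne3: "n = 3 * (n div 3) + 1" by presburger
    have bc: "N 0 (board n) = N 1 (board n) + 1" "N 1 (board n) = N 2 (board n)"
      using board_count[of "n div 3"] ne3 by metis+
    have pos: "N 1 (board n) > 0" if "col h = 1"
    proof -
      have "h \<in> {g\<in>board n. col g = 1}" using assms(2) that by simp
      moreover have "finite {g\<in>board n. col g = 1}" using board_fin by simp
      ultimately show ?thesis unfolding N_def by (metis card_gt_0_iff empty_iff)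
    qed
    have d: "\<And>c. N c (board n - {h}) = (if col h = c then N c (board n) - 1 else N c (board n))"
      using N_diff[OF assms(2)] by blast
    have e01: "E {h} 0 1 = E (board n - {h}) 0 1" and e02: "E {h} 0 2 = E (board n - {h}) 0 2"
      using Elast by auto
    show False
    proof -
      consider "col h = 0" | "col h = 1" | "col h = 2" using hcol by blast
      then show False
      proof cases
        case 1 then show ?thesis using e01 bc d unfolding E_def N_single by simp
      next
        case 2 then show ?thesis using e02 bc d pos unfolding E_def N_single by auto
      next
        case 3 then show ?thesis using e01 bc d unfolding E_def N_single by simp
      qed
    qed
  next
    case 2
    have "N 0 P = N 1 P" "N 1 P = N 2 P"
      using rot_count[OF Psub sym, of 0] rot_count[OF Psub sym, of 1] 2 by simp_all
    then have "E P 0 1" "E P 0 2" unfolding E_def by simp_all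
    then show False using Ek Elast Eh by auto
  next
    case 3
    have "N 0 P = N 2 P" "N 1 P = N 0 P"
      using rot_count[OF Psub sym, of 0] rot_count[OF Psub sym, of 1] 3 by simp_all
    then have "E P 0 1" "E P 0 2" unfolding E_def by simp_all
    then show False using Ek Elast Eh by auto
  qed
qed

end
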